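(* Let $X$ be an $L$-space with a convexifying operator $P$ such that $X^{\rm inv}\cap X^{\rm c}\ne\{\theta\}$, let $(T,r)$ be a metric compact, $Q\subset T$ a compact set, $\mu$ a Borel measure on $T$, $\omega$ a modulus of continuity, and $x_1,\dots,x_n\in T$. Consider $\Lambda f=\int_Q f(s)\,d\mu(s)$ on $W=H^\omega(T,X)$ and the information $I(f)=(P(f(x_1)),\dots,P(f(x_n)))$. Then $$\mathcal E(\Lambda,H^\omega(T,X),I,X)=\int_Q\min_{i=1,\dots,n}\omega(r(x_i,t))\,d\mu(t),$$ and the method $\Phi^*(I(f))=\sum_{i=1}^nP(f(x_i))\,\mu(T_i\cap Q)$ is optimal, where $\tilde T_i=\{t\in T: r(t,x_i)\le r(t,x_j)\ \forall j\ne i\}$, $T_1=\tilde T_1$ and $T_j=\tilde T_j\setminus\bigcup_{i=1}^{j-1}\tilde T_i$ for $j=2,\dots,n$.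
   Context: Semilinear space: a set $X$ with addition and multiplication by reals such that for all $x,y,z\in X$, $\alpha,\beta\in\mathbb R$: $x+y=y+x$; $x+(y+z)=(x+y)+z$; there is $\theta$ with $x+\theta=x$; $\alpha(x+y)=\alpha x+\alpha y$; $\alpha(\beta x)=(\alpha\beta)x$; $1\cdot x=x$, $0\cdot x=\theta$. $x$ is convex if $(\alpha+\beta)x=\alpha x+\beta x$ for all $\alpha,\beta\ge0$ ($X^{\rm c}$: convex elements); $x$ is invertible if $x+x'=\theta$ for some $x'$ ($X^{\rm inv}$: invertible elements). An $L$-space is a semilinear space with a complete separable metric $h_X$ satisfying $h_X(\alpha x,\alpha y)=|\alpha|h_X(x,y)$ and $h_X(x+z,y+z)\le h_X(x,y)$. A convexifying operator is a surjective $P\colon X\to X^{\rm c}$ with $h_X(P(x),P(y))\le h_X(x,y)$, $P\circ P=P$, $P(\alpha x+\beta y)=\alpha P(x)+\beta P(y)$. Integral: $f\colon T\to X$ is measurable if $h_X(f(\cdot),x)$ is Borel measurable for all $x$; for simple bounded $f$ with values $f_i$ on disjoint Borel sets $T_i$ covering $T$, $\int_Tf\,d\mu=\sum_iP(f_i)\mu(T_i)$; for bounded measurable $f$, $\int_Tf\,d\mu$ is the limit of integrals of any uniformly bounded sequence of simple functions converging to $f$ a.e.; $\int_Qf\,d\mu=\int_T\chi_Qf\,d\mu$. Modulus of continuity: non-decreasing continuous $\omega\colon[0,\infty)\to[0,\infty)$, $\omega(0)=0$, $\omega(a+b)\le\omega(a)+\omega(b)$; $H^\omega(T,X)=\{f\colon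 T\to X: h_X(f(s),f(t))\le\omega(r(s,t))\ \forall s,t\}$. Optimal recovery: for a class $W$, a map $\Lambda\colon W\to Z$ into a metric space $(Z,h_Z)$ and an information map $I$ on $W$, a method is any map $\Phi$ from the values of $I$ to $Z$; its error is $\mathcal E(\Lambda,W,I,\Phi,Z)=\sup_{w\in W}h_Z(\Lambda(w),\Phi(I(w)))$; the optimal error is $\mathcal E(\Lambda,W,I,Z)=\inf_\Phi\mathcal E(\Lambda,W,I,\Phi,Z)$, and $\Phi^*$ is optimal if it attains this infimum. *)

theory Defs
  imports "HOL-Analysis.Analysis"
begin

text \<open>The semilinear space X is a type 'x of class comm_monoid_add (addition +,
  neutral element theta = 0), together with an explicit multiplication by reals sm.
  The metric h_X is dist of the type (class complete_space gives completeness).\<close>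

definition semilinear :: "(real \<Rightarrow> 'x::comm_monoid_add \<Rightarrow> 'x) \<Rightarrow> bool" where
  "semilinear sm \<longleftrightarrow>
     (\<forall>a x y. sm a (x + y) = sm a x + sm a y) \<and>
     (\<forall>a b x. sm a (sm b x) = sm (a * b) x) \<and>
     (\<forall>x. sm 1 x = x) \<and>
     (\<forall>x. sm 0 x = 0)"

definition convex_elems :: "(real \<Rightarrow> 'x::comm_monoid_add \<Rightarrow> 'x) \<Rightarrow> 'x set" where
  "convex_elems sm = {x. \<forall>a b. a \<ge> 0 \<longrightarrow> b \<ge> 0 \<longrightarrow> sm (a + b) x = sm a x + sm b x}"

definition inv_elems :: "'x::comm_monoid_add set" where
  "inv_elems = {x. \<exists>x'. x + x' = 0}"

definition L_space :: "(real \<Rightarrow> 'x::{comm_monoid_add,complete_space} \<Rightarrow> 'x) \<Rightarrow> bool" where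
  "L_space sm \<longleftrightarrow> semilinear sm \<and>
     (\<exists>D. countable D \<and> closure D = (UNIV :: 'x set)) \<and>
     (\<forall>a x y. dist (sm a x) (sm a y) = \<bar>a\<bar> * dist x y) \<and>
     (\<forall>x y z::'x. dist (x + z) (y + z) \<le> dist x y)"

definition convexifying ::
  "(real \<Rightarrow> 'x::{comm_monoid_add,metric_space} \<Rightarrow> 'x) \<Rightarrow> ('x \<Rightarrow> 'x) \<Rightarrow> bool" where
  "convexifying sm P \<longleftrightarrow>
     range P = convex_elems sm \<and>
     (\<forall>x y. dist (P x) (P y) \<le> dist x y) \<and>
     (\<forall>x. P (P x) = P x) \<and>
     (\<forall>a b x y. P (sm a x + sm b y) = sm a (P x) + sm b (P y))"

definition modulus_of_continuity :: "(real \<Rightarrow> real) \<Rightarrow> bool" where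
  "modulus_of_continuity \<omega> \<longleftrightarrow>
     mono_on {0..} \<omega> \<and> continuous_on {0..} \<omega> \<and> \<omega> 0 = 0 \<and>
     (\<forall>t\<ge>0. \<omega> t \<ge> 0) \<and>
     (\<forall>a b. a \<ge> 0 \<longrightarrow> b \<ge> 0 \<longrightarrow> \<omega> (a + b) \<le> \<omega> a + \<omega> b)"

definition Hclass :: "'a::metric_space set \<Rightarrow> (real \<Rightarrow> real) \<Rightarrow> ('a \<Rightarrow> 'x::metric_space) set" where
  "Hclass T \<omega> = {f. \<forall>s\<in>T. \<forall>t\<in>T. dist (f s) (f t) \<le> \<omega> (dist s t)}"

definition simple_X :: "'a measure \<Rightarrow> ('a \<Rightarrow> 'x) \<Rightarrow> bool" where
  "simple_X M f \<longleftrightarrow> finite (f ` space M) \<and>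
     (\<forall>v\<in>f ` space M. {t\<in>space M. f t = v} \<in> sets M)"

definition simple_int ::
  "(real \<Rightarrow> 'x::comm_monoid_add \<Rightarrow> 'x) \<Rightarrow> ('x \<Rightarrow> 'x) \<Rightarrow> 'a measure \<Rightarrow> ('a \<Rightarrow> 'x) \<Rightarrow> 'x" where
  "simple_int sm P M f = (\<Sum>v\<in>f ` space M. sm (measure M {t\<in>space M. f t = v}) (P v))"

definition X_integral ::
  "(real \<Rightarrow> 'x::{comm_monoid_add,metric_space} \<Rightarrow> 'x) \<Rightarrow> ('x \<Rightarrow> 'x) \<Rightarrow> 'a measure \<Rightarrow> ('a \<Rightarrow> 'x) \<Rightarrow> 'x" where
  "X_integral sm P M f = (THE y. \<forall>s::nat \<Rightarrow> 'a \<Rightarrow> 'x.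
      ((\<forall>k. simple_X M (s k)) \<and>
       (\<exists>c C. \<forall>k. \<forall>t\<in>space M. dist (s k t) c \<le> C) \<and>
       (AE t in M. (\<lambda>k. s k t) \<longlonglongrightarrow> f t))
      \<longrightarrow> (\<lambda>k. simple_int sm P M (s k)) \<longlonglongrightarrow> y)"

definition set_X_integral ::
  "(real \<Rightarrow> 'x::{comm_monoid_add,metric_space} \<Rightarrow> 'x) \<Rightarrow> ('x \<Rightarrow> 'x) \<Rightarrow> 'a measure \<Rightarrow> 'a set \<Rightarrow> ('a \<Rightarrow> 'x) \<Rightarrow> 'x" where
  "set_X_integral sm P M Q f = X_integral sm P M (\<lambda>t. if t \<in> Q then f t else 0)"

definition rec_error :: "('w \<Rightarrow> 'z::metric_space) \<Rightarrow> 'w set \<Rightarrow> ('w \<Rightarrow> 'i) \<Rightarrow> ('i \<Rightarrow> 'z) \<Rightarrow> ereal" where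
  "rec_error \<Lambda> W I \<Phi> = (SUP w\<in>W. ereal (dist (\<Lambda> w) (\<Phi> (I w))))"

definition opt_rec_error :: "('w \<Rightarrow> 'z::metric_space) \<Rightarrow> 'w set \<Rightarrow> ('w \<Rightarrow> 'i) \<Rightarrow> ereal" where
  "opt_rec_error \<Lambda> W I = (INF \<Phi>. rec_error \<Lambda> W I \<Phi>)"

text \<open>The partition T_1,...,T_n (indices 0-based here).\<close>

definition vor_tilde :: "'a::metric_space set \<Rightarrow> 'a list \<Rightarrow> nat \<Rightarrow> 'a set" where
  "vor_tilde T xs i = {t\<in>T. \<forall>j<length xs. j \<noteq> i \<longrightarrow> dist t (xs ! i) \<le> dist t (xs ! j)}"

definition vor_part :: "'a::metric_space set \<Rightarrow> 'a list \<Rightarrow> nat \<Rightarrow> 'a set" where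
  "vor_part T xs j = vor_tilde T xs j - (\<Union>i<j. vor_tilde T xs i)"

end

theory Submission
  imports Defs
begin


locale LS =
  fixes sm :: "real \<Rightarrow> 'x::{comm_monoid_add,complete_space} \<Rightarrow> 'x" and P :: "'x \<Rightarrow> 'x"
  assumes Lsp: "L_space sm" and Cvx: "convexifying sm P"
begin

lemma sm_add: "sm a (x + y) = sm a x + sm a y"
  using Lsp unfolding L_space_def semilinear_def by blast
lemma sm_sm: "sm a (sm b x) = sm (a * b) x"
  using Lsp unfolding L_space_def semilinear_def by blast
lemma sm_0: "sm 0 x = 0"
  using Lsp unfolding L_space_def semilinear_def by blast
lemma sm_zero: "sm a 0 = 0"
  by (metis mult_zero_right sm_0 sm_sm)
lemma dist_sm: "dist (sm a x) (sm a y) = \<bar>a\<bar> * dist x y"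
  using Lsp unfolding L_space_def by blast
lemma dist_tr: "dist (x + z) (y + z) \<le> dist x (y::'x)"
  using Lsp unfolding L_space_def by blast
lemma dist_add2: "dist (a + b) (c + d) \<le> dist a c + dist b (d::'x)"
proof -
  have "dist (a + b) (c + d) \<le> dist (a + b) (c + b) + dist (c + b) (c + d)"
    by (rule dist_triangle)
  also have "dist (c + b) (c + d) = dist (b + c) (d + c)" by (simp add: add.commute)
  finally show ?thesis using dist_tr[of a b c] dist_tr[of b c d] by linarith
qed
lemma dist_sum: "dist (sum f A) (sum g A :: 'x) \<le> (\<Sum>i\<in>A. dist (f i) (g i))"
proof (induction A rule: infinite_finite_induct)
  case (insert x F)
  then show ?case using dist_add2[of "f x" "sum f F" "g x" "sum g F"] by simp
qed auto

lemma P_nonexp: "dist (P x) (P y) \<le> dist x y"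
  using Cvx unfolding convexifying_def by blast
lemma P_idem: "P (P x) = P x"
  using Cvx unfolding convexifying_def by blast
lemma P_lin: "P (sm a x + sm b y) = sm a (P x) + sm b (P y)"
  using Cvx unfolding convexifying_def by blast
lemma P_zero: "P 0 = 0"
  using P_lin[of 0 0 0 0] by (simp add: sm_0)
lemma P_sm: "P (sm a x) = sm a (P x)"
  using P_lin[of a x 0 x] by (simp add: sm_0)
lemma P_convex: "P x \<in> convex_elems sm"
  using Cvx unfolding convexifying_def by blast
lemma convex_P: "x \<in> convex_elems sm \<Longrightarrow> P x = x"
  using Cvx unfolding convexifying_def by (metis P_idem imageE)
lemma convex_add: "x \<in> convex_elems sm \<Longrightarrow> a \<ge> 0 \<Longrightarrow> b \<ge> 0 \<Longrightarrow> sm (a + b) x = sm a x + sm b x"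
  unfolding convex_elems_def by blast

lemma conv_sum: assumes "x \<in> convex_elems sm" "\<And>j. j \<in> J \<Longrightarrow> a j \<ge> 0"
  shows "sm (sum a J) x = (\<Sum>j\<in>J. sm (a j) x)"
  using assms(2)
proof (induction J rule: infinite_finite_induct)
  case (infinite A) then show ?case by (simp add: sm_0)
next
  case empty then show ?case by (simp add: sm_0)
next
  case (insert y F)
  have "sm (sum a (insert y F)) x = sm (a y + sum a F) x" using insert by simp
  also have "\<dots> = sm (a y) x + sm (sum a F) x"
    using insert by (intro convex_add assms(1)) (auto intro: sum_nonneg)
  finally show ?case using insert by simp
qed

lemma dist_scal_le: assumes "x \<in> convex_elems sm" "0 \<le> b" "b \<le> a"
  shows "dist (sm a x) (sm b x) \<le> (a - b) * dist x 0"
proof -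
  have "sm a x = sm (a - b) x + sm b x" using convex_add[OF assms(1), of "a - b" b] assms by simp
  hence "dist (sm a x) (sm b x) = dist (sm (a - b) x + sm b x) (0 + sm b x)" by simp
  also have "\<dots> \<le> dist (sm (a - b) x) 0" by (rule dist_tr)
  also have "\<dots> = (a - b) * dist x 0" using dist_sm[of "a - b" x 0] assms by (simp add: sm_zero)
  finally show ?thesis .
qed

lemma dist_scal_abs: assumes "x \<in> convex_elems sm" "0 \<le> b" "0 \<le> a"
  shows "dist (sm a x) (sm b x) \<le> \<bar>a - b\<bar> * dist x 0"
proof (cases "b \<le> a")
  case True then show ?thesis using dist_scal_le[OF assms(1,2) True] by simp
next
  case False then show ?thesis using dist_scal_le[OF assms(1,3), of b] by (simp add: dist_commute)
qed

lemma dist_scal_ge: assumes "x \<in> convex_elems sm" "x \<in> inv_elems" "0 \<le> b" "b \<le> a"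
  shows "(a - b) * dist x 0 \<le> dist (sm a x) (sm b x)"
proof -
  obtain x' where x': "x + x' = 0" using assms(2) unfolding inv_elems_def by blast
  have z: "sm b x + sm b x' = 0" using sm_add[of b x x'] x' by (simp add: sm_zero)
  have "sm a x = sm (a - b) x + sm b x" using convex_add[OF assms(1), of "a - b" b] assms by simp
  hence "sm a x + sm b x' = sm (a - b) x" using z by (simp add: add.assoc)
  hence "dist (sm (a - b) x) 0 \<le> dist (sm a x) (sm b x)"
    using dist_tr[of "sm a x" "sm b x'" "sm b x"] z by simp
  moreover have "dist (sm (a - b) x) 0 = (a - b) * dist x 0"
    using dist_sm[of "a - b" x 0] assms by (simp add: sm_zero)
  ultimately show ?thesis by simp
qed

end



lemma simple_X_iff: "simple_X M s = simple_function M s"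
  unfolding simple_X_def simple_function_def
  by (simp add: vimage_def Int_def conj_commute)

lemma simple_X_meas: "simple_X M s \<Longrightarrow> s \<in> borel_measurable M"
  by (simp add: simple_X_iff borel_measurable_simple_function)

lemma rep_simple:
  assumes "finite (\<kappa> ` space M)" "\<And>j. {t\<in>space M. \<kappa> t = j} \<in> sets M"
  shows "simple_X M (\<lambda>t. F (\<kappa> t))"
  unfolding simple_X_def
proof
  show "finite ((\<lambda>t. F (\<kappa> t)) ` space M)"
    using assms(1) by (metis finite_imageI image_image)
  show "\<forall>v\<in>(\<lambda>t. F (\<kappa> t)) ` space M. {t \<in> space M. F (\<kappa> t) = v} \<in> sets M"
  proof
    fix v
    have "{t \<in> space M. F (\<kappa> t) = v} = (\<Union>j\<in>{j\<in>\<kappa> ` space M. F j = v}. {t\<in>space M. \<kappa> t = j})"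
      by auto
    also have "\<dots> \<in> sets M" using assms by (intro sets.finite_UN) auto
    finally show "{t \<in> space M. F (\<kappa> t) = v} \<in> sets M" .
  qed
qed

lemma rep_real:
  fixes h :: "'b \<Rightarrow> real"
  assumes fin: "finite_measure M"
    and "finite (\<kappa> ` space M)" "\<And>j. {t\<in>space M. \<kappa> t = j} \<in> sets M"
  shows "integral\<^sup>L M (\<lambda>t. h (\<kappa> t)) = (\<Sum>j\<in>\<kappa> ` space M. measure M {t\<in>space M. \<kappa> t = j} * h j)"
proof -
  let ?A = "\<lambda>j. {t\<in>space M. \<kappa> t = j}"
  have hb: "has_bochner_integral M (\<lambda>t. \<Sum>j\<in>\<kappa> ` space M. indicator (?A j) t *\<^sub>R h j)
       (\<Sum>j\<in>\<kappa> ` space M. measure M (?A j) *\<^sub>R h j)"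
  proof (intro has_bochner_integral_sum has_bochner_integral_indicator)
    fix j show "?A j \<in> sets M" by (rule assms(3))
    show "emeasure M (?A j) < \<infinity>" using finite_measure.emeasure_finite[OF fin, of "?A j"]
      by (simp add: less_top)
  qed
  have eq: "(\<Sum>j\<in>\<kappa> ` space M. indicator (?A j) t *\<^sub>R h j) = h (\<kappa> t)" if "t \<in> space M" for t
  proof -
    have "(\<Sum>j\<in>\<kappa> ` space M. indicator (?A j) t *\<^sub>R h j) = (\<Sum>j\<in>\<kappa> ` space M. if j = \<kappa> t then h j else 0)"
      using that by (intro sum.cong) (auto simp: indicator_def)
    also have "\<dots> = h (\<kappa> t)" using that assms(2) by (simp add: sum.delta')
    finally show ?thesis .
  qed
  have "integral\<^sup>L M (\<lambda>t. h (\<kappa> t)) = integral\<^sup>L M (\<lambda>t. \<Sum>j\<in>\<kappa> ` space M. indicator (?A j) t *\<^sub>R h j)"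
    using eq by (intro Bochner_Integration.integral_cong) auto
  also have "\<dots> = (\<Sum>j\<in>\<kappa> ` space M. measure M (?A j) *\<^sub>R h j)"
    using hb by (rule has_bochner_integral_integral_eq)
  finally show ?thesis by simp
qed

locale MS = LS sm P for sm :: "real \<Rightarrow> 'x::{comm_monoid_add,complete_space} \<Rightarrow> 'x" and P +
  fixes M :: "'a measure"
  assumes fin: "finite_measure M"
begin

lemma rep_int:
  assumes "finite (\<kappa> ` space M)" "\<And>j. {t\<in>space M. \<kappa> t = j} \<in> sets M"
  shows "simple_int sm P M (\<lambda>t. F (\<kappa> t)) =
    (\<Sum>j\<in>\<kappa> ` space M. sm (measure M {t\<in>space M. \<kappa> t = j}) (P (F j)))"
proof -
  let ?K = "\<kappa> ` space M" and ?A = "\<lambda>j. {t\<in>space M. \<kappa> t = j}"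
  have img: "(\<lambda>t. F (\<kappa> t)) ` space M = F ` ?K" by (simp add: image_image)
  have "simple_int sm P M (\<lambda>t. F (\<kappa> t)) =
      (\<Sum>v\<in>F ` ?K. sm (measure M {t\<in>space M. F (\<kappa> t) = v}) (P v))"
    unfolding simple_int_def img ..
  also have "\<dots> = (\<Sum>v\<in>F ` ?K. \<Sum>j\<in>{j\<in>?K. F j = v}. sm (measure M (?A j)) (P (F j)))"
  proof (rule sum.cong[OF refl])
    fix v assume "v \<in> F ` ?K"
    have "{t\<in>space M. F (\<kappa> t) = v} = (\<Union>j\<in>{j\<in>?K. F j = v}. ?A j)" by auto
    moreover have "measure M (\<Union>j\<in>{j\<in>?K. F j = v}. ?A j) = (\<Sum>j\<in>{j\<in>?K. F j = v}. measure M (?A j))"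
      by (rule finite_measure.finite_measure_finite_Union[OF fin])
        (use assms in \<open>auto simp: disjoint_family_on_def\<close>)
    ultimately have "measure M {t\<in>space M. F (\<kappa> t) = v} = (\<Sum>j\<in>{j\<in>?K. F j = v}. measure M (?A j))"
      by simp
    hence "sm (measure M {t\<in>space M. F (\<kappa> t) = v}) (P v) = (\<Sum>j\<in>{j\<in>?K. F j = v}. sm (measure M (?A j)) (P v))"
      by (simp add: conv_sum P_convex)
    also have "\<dots> = (\<Sum>j\<in>{j\<in>?K. F j = v}. sm (measure M (?A j)) (P (F j)))" by simp
    finally show "sm (measure M {t\<in>space M. F (\<kappa> t) = v}) (P v) = \<dots>" .
  qed
  also have "\<dots> = (\<Sum>j\<in>?K. sm (measure M (?A j)) (P (F j)))"
    using assms(1) by (rule sum.image_gen[symmetric])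
  finally show ?thesis .
qed

lemma dist_simple:
  assumes s: "simple_X M s" and s': "simple_X M s'"
  shows "dist (simple_int sm P M s) (simple_int sm P M s') \<le> integral\<^sup>L M (\<lambda>t. dist (s t) (s' t))"
proof -
  define \<kappa> where "\<kappa> t = (s t, s' t)" for t
  let ?K = "\<kappa> ` space M" and ?A = "\<lambda>j. {t\<in>space M. \<kappa> t = j}"
  have fK: "finite ?K"
  proof (rule finite_subset)
    show "?K \<subseteq> s ` space M \<times> s' ` space M" by (auto simp: \<kappa>_def)
    show "finite (s ` space M \<times> s' ` space M)" using s s' unfolding simple_X_def by blast
  qed
  have mA: "?A j \<in> sets M" for j
  proof (cases "fst j \<in> s ` space M \<and> snd j \<in> s' ` space M")
    case True
    have "?A j = {t\<in>space M. s t = fst j} \<inter> {t\<in>space M. s' t = snd j}"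
      by (auto simp: \<kappa>_def)
    then show ?thesis using True s s' unfolding simple_X_def by auto
  next
    case False
    then have e: "?A j = {}" by (auto simp: \<kappa>_def)
    show ?thesis unfolding e by simp
  qed
  have e1: "simple_int sm P M s = (\<Sum>j\<in>?K. sm (measure M (?A j)) (P (fst j)))"
    using rep_int[OF fK mA, of fst] by (simp add: \<kappa>_def)
  have e2: "simple_int sm P M s' = (\<Sum>j\<in>?K. sm (measure M (?A j)) (P (snd j)))"
    using rep_int[OF fK mA, of snd] by (simp add: \<kappa>_def)
  have "dist (simple_int sm P M s) (simple_int sm P M s') \<le>
      (\<Sum>j\<in>?K. dist (sm (measure M (?A j)) (P (fst j))) (sm (measure M (?A j)) (P (snd j))))"
    unfolding e1 e2 by (rule dist_sum)
  also have "\<dots> \<le> (\<Sum>j\<in>?K. measure M (?A j) * dist (fst j) (snd j))"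
    by (intro sum_mono) (simp add: dist_sm mult_left_mono P_nonexp)
  also have "\<dots> = integral\<^sup>L M (\<lambda>t. dist (fst (\<kappa> t)) (snd (\<kappa> t)))"
    using rep_real[OF fin fK mA, of "\<lambda>j. dist (fst j) (snd j)"] by simp
  also have "\<dots> = integral\<^sup>L M (\<lambda>t. dist (s t) (s' t))" by (simp add: \<kappa>_def)
  finally show ?thesis .
qed

end



definition good_seq :: "'a measure \<Rightarrow> ('a \<Rightarrow> 'x::metric_space) \<Rightarrow> (nat \<Rightarrow> 'a \<Rightarrow> 'x) \<Rightarrow> bool" where
  "good_seq M g s \<longleftrightarrow> ((\<forall>k. simple_X M (s k)) \<and>
       (\<exists>c C. \<forall>k. \<forall>t\<in>space M. dist (s k t) c \<le> C) \<and>
       (AE t in M. (\<lambda>k. s k t) \<longlonglongrightarrow> g t))"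

lemma tendsto_close:
  fixes X Y :: "nat \<Rightarrow> 'x::metric_space"
  assumes "X \<longlonglongrightarrow> y" "(\<lambda>k. dist (Y k) (X k)) \<longlonglongrightarrow> 0"
  shows "Y \<longlonglongrightarrow> y"
proof -
  have "(\<lambda>k. dist (X k) y) \<longlonglongrightarrow> 0" using assms(1) by (rule tendsto_dist_iff[THEN iffD1])
  then have g0: "(\<lambda>k. dist (Y k) (X k) + dist (X k) y) \<longlonglongrightarrow> 0"
    using tendsto_add[OF assms(2)] by fastforce
  have "(\<lambda>k. dist (Y k) y) \<longlonglongrightarrow> 0"
    by (rule Lim_null_comparison[OF _ g0]) (simp add: dist_triangle)
  thus ?thesis by (rule tendsto_dist_iff[THEN iffD2])
qed

context MS
begin

lemma simple_dist_meas:
  assumes s: "simple_X M s" and g: "g \<in> borel_measurable M"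
  shows "(\<lambda>t. dist (s t) (g t)) \<in> borel_measurable M"
proof -
  have fin: "finite (s ` space M)" and ms: "\<And>v. v \<in> s ` space M \<Longrightarrow> {t\<in>space M. s t = v} \<in> sets M"
    using s unfolding simple_X_def by auto
  have m: "(\<lambda>t. \<Sum>v\<in>s ` space M. indicator {t\<in>space M. s t = v} t * dist v (g t)) \<in> borel_measurable M"
  proof (intro borel_measurable_sum borel_measurable_times)
    fix v assume "v \<in> s ` space M"
    then show "indicator {t\<in>space M. s t = v} \<in> borel_measurable M"
      using ms by (intro borel_measurable_indicator) auto
    show "(\<lambda>t. dist v (g t)) \<in> borel_measurable M"
      by (intro borel_measurable_continuous_on[OF _ g] continuous_intros)
  qed
  have eq: "(\<Sum>v\<in>s ` space M. indicator {t\<in>space M. s t = v} t * dist v (g t)) = dist (s t) (g t)"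
    if "t \<in> space M" for t
  proof -
    have "(\<Sum>v\<in>s ` space M. indicator {t\<in>space M. s t = v} t * dist v (g t)) =
      (\<Sum>v\<in>s ` space M. if v = s t then dist v (g t) else 0)"
      using that by (intro sum.cong) (auto simp: indicator_def)
    also have "\<dots> = dist (s t) (g t)" using that fin by (simp add: sum.delta')
    finally show ?thesis .
  qed
  show ?thesis using m by (rule measurable_cong[THEN iffD1, rotated]) (simp add: eq)
qed


lemma good_seq_simple: "good_seq M g s \<Longrightarrow> simple_X M (s k)"
  unfolding good_seq_def by blast

lemma good_meas: "good_seq M g s \<Longrightarrow> s k \<in> borel_measurable M"
  unfolding good_seq_def using simple_X_meas by blast

lemma good_dint_integrable:
  assumes "good_seq M g s" "g \<in> borel_measurable M" "\<forall>t\<in>space M. dist (g t) c \<le> C"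
  shows "integrable M (\<lambda>t. dist (s k t) (g t))"
proof -
  obtain c' C' where b: "\<forall>k. \<forall>t\<in>space M. dist (s k t) c' \<le> C'"
    using assms(1) unfolding good_seq_def by blast
  have "dist (s k t) (g t) \<le> C' + dist c' c + C" if "t \<in> space M" for t
  proof -
    have "dist (s k t) (g t) \<le> dist (s k t) c' + dist c' (g t)" by (rule dist_triangle)
    moreover have "dist c' (g t) \<le> dist c' c + dist c (g t)" by (rule dist_triangle)
    moreover have "dist c (g t) \<le> C" using assms(3) that by (simp add: dist_commute)
    moreover have "dist (s k t) c' \<le> C'" using b that by blast
    ultimately show ?thesis by linarith
  qed
  then show ?thesis
    by (intro finite_measure.integrable_const_bound[OF fin, where B="C' + dist c' c + C"])
      (auto intro!: AE_I2 simple_dist_meas assms(2) good_seq_simple[OF assms(1)])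
qed

lemma good_dint0:
  assumes "good_seq M g s" "g \<in> borel_measurable M" "\<forall>t\<in>space M. dist (g t) c \<le> C"
  shows "(\<lambda>k. integral\<^sup>L M (\<lambda>t. dist (s k t) (g t))) \<longlonglongrightarrow> 0"
proof -
  obtain c' C' where b: "\<forall>k. \<forall>t\<in>space M. dist (s k t) c' \<le> C'"
    using assms(1) unfolding good_seq_def by blast
  have bd: "dist (s k t) (g t) \<le> C' + dist c' c + C" if "t \<in> space M" for t k
  proof -
    have "dist (s k t) (g t) \<le> dist (s k t) c' + dist c' (g t)" by (rule dist_triangle)
    moreover have "dist c' (g t) \<le> dist c' c + dist c (g t)" by (rule dist_triangle)
    moreover have "dist c (g t) \<le> C" using assms(3) that by (simp add: dist_commute)
    moreover have "dist (s k t) c' \<le> C'" using b that by blast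
    ultimately show ?thesis by linarith
  qed
  have ae: "AE t in M. (\<lambda>k. s k t) \<longlonglongrightarrow> g t" using assms(1) unfolding good_seq_def by blast
  have "(\<lambda>k. integral\<^sup>L M (\<lambda>t. dist (s k t) (g t))) \<longlonglongrightarrow> integral\<^sup>L M (\<lambda>t. 0::real)"
  proof (rule integral_dominated_convergence[where w="\<lambda>_. C' + dist c' c + C"])
    show "(\<lambda>t. 0::real) \<in> borel_measurable M" by simp
    show "(\<lambda>t. dist (s k t) (g t)) \<in> borel_measurable M" for k
      by (intro simple_dist_meas assms(2) good_seq_simple[OF assms(1)])
    show "integrable M (\<lambda>_. C' + dist c' c + C)" by (rule finite_measure.integrable_const[OF fin])
    show "AE t in M. (\<lambda>k. dist (s k t) (g t)) \<longlonglongrightarrow> 0"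
      using ae by eventually_elim (rule tendsto_dist_iff[THEN iffD1])
    show "AE t in M. norm (dist (s k t) (g t)) \<le> C' + dist c' c + C" for k
      using bd by (intro AE_I2) simp
  qed
  thus ?thesis by simp
qed

lemma good_pair:
  assumes "good_seq M g s" "good_seq M g s'" "g \<in> borel_measurable M" "\<forall>t\<in>space M. dist (g t) c \<le> C"
  shows "dist (simple_int sm P M (s k)) (simple_int sm P M (s' m)) \<le>
    integral\<^sup>L M (\<lambda>t. dist (s k t) (g t)) + integral\<^sup>L M (\<lambda>t. dist (s' m t) (g t))"
proof -
  have "dist (simple_int sm P M (s k)) (simple_int sm P M (s' m)) \<le> integral\<^sup>L M (\<lambda>t. dist (s k t) (s' m t))"
    using assms(1,2) unfolding good_seq_def by (intro dist_simple) auto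
  also have "\<dots> \<le> integral\<^sup>L M (\<lambda>t. dist (s k t) (g t) + dist (s' m t) (g t))"
  proof (rule integral_mono)
    show "integrable M (\<lambda>t. dist (s k t) (s' m t))"
    proof -
      obtain c' C' where b: "\<forall>k. \<forall>t\<in>space M. dist (s k t) c' \<le> C'"
        using assms(1) unfolding good_seq_def by blast
      obtain c'' C'' where b': "\<forall>k. \<forall>t\<in>space M. dist (s' k t) c'' \<le> C''"
        using assms(2) unfolding good_seq_def by blast
      have "dist (s k t) (s' m t) \<le> C' + dist c' c'' + C''" if "t \<in> space M" for t
      proof -
        have "dist (s k t) (s' m t) \<le> dist (s k t) c' + dist c' (s' m t)" by (rule dist_triangle)
        moreover have "dist c' (s' m t) \<le> dist c' c'' + dist c'' (s' m t)" by (rule dist_triangle)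
        moreover have "dist c'' (s' m t) \<le> C''" using b' that by (simp add: dist_commute)
        moreover have "dist (s k t) c' \<le> C'" using b that by blast
        ultimately show ?thesis by linarith
      qed
      then show ?thesis
        by (intro finite_measure.integrable_const_bound[OF fin, where B="C' + dist c' c'' + C''"])
          (auto intro!: AE_I2 simple_dist_meas[OF good_seq_simple[OF assms(1)] simple_X_meas[OF good_seq_simple[OF assms(2)]]])
    qed
    show "integrable M (\<lambda>t. dist (s k t) (g t) + dist (s' m t) (g t))"
      using good_dint_integrable[OF assms(1,3,4)] good_dint_integrable[OF assms(2,3,4)] by auto
    show "dist (s k t) (s' m t) \<le> dist (s k t) (g t) + dist (s' m t) (g t)" for t
      by (rule dist_triangle2)
  qed
  also have "\<dots> = integral\<^sup>L M (\<lambda>t. dist (s k t) (g t)) + integral\<^sup>L M (\<lambda>t. dist (s' m t) (g t))"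
    using good_dint_integrable[OF assms(1,3,4)] good_dint_integrable[OF assms(2,3,4)] by auto
  finally show ?thesis .
qed

lemma X_int_lim:
  assumes g: "g \<in> borel_measurable M" and gb: "\<forall>t\<in>space M. dist (g t) c \<le> C"
    and s0: "good_seq M g s0" and s: "good_seq M g s"
  shows "(\<lambda>k. simple_int sm P M (s k)) \<longlonglongrightarrow> X_integral sm P M g"
proof -
  let ?a = "\<lambda>s k. integral\<^sup>L M (\<lambda>t. dist (s k t) (g t))"
  have "Cauchy (\<lambda>k. simple_int sm P M (s0 k))"
  proof (rule metric_CauchyI)
    fix e :: real assume e: "0 < e"
    have "eventually (\<lambda>k. ?a s0 k < e / 2) sequentially"
      using good_dint0[OF s0 g gb] e by (intro order_tendstoD(2)) auto
    then obtain N where N: "\<And>k. k \<ge> N \<Longrightarrow> ?a s0 k < e / 2"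
      by (auto simp: eventually_sequentially)
    show "\<exists>N. \<forall>m\<ge>N. \<forall>n\<ge>N. dist (simple_int sm P M (s0 m)) (simple_int sm P M (s0 n)) < e"
    proof (intro exI[of _ N] allI impI)
      fix m n assume "m \<ge> N" "n \<ge> N"
      then have "?a s0 m < e / 2" "?a s0 n < e / 2" using N by auto
      moreover have "dist (simple_int sm P M (s0 m)) (simple_int sm P M (s0 n)) \<le> ?a s0 m + ?a s0 n"
        by (rule good_pair[OF s0 s0 g gb])
      ultimately show "dist (simple_int sm P M (s0 m)) (simple_int sm P M (s0 n)) < e" by linarith
    qed
  qed
  then obtain y where y: "(\<lambda>k. simple_int sm P M (s0 k)) \<longlonglongrightarrow> y"
    using Cauchy_convergent convergent_def by blast
  have all: "(\<lambda>k. simple_int sm P M (s' k)) \<longlonglongrightarrow> y" if s': "good_seq M g s'" for s'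
  proof (rule tendsto_close[OF y])
    have g0: "(\<lambda>k. ?a s' k + ?a s0 k) \<longlonglongrightarrow> 0"
      using tendsto_add[OF good_dint0[OF s' g gb] good_dint0[OF s0 g gb]] by simp
    show "(\<lambda>k. dist (simple_int sm P M (s' k)) (simple_int sm P M (s0 k))) \<longlonglongrightarrow> 0"
      by (rule Lim_null_comparison[OF _ g0]) (use good_pair[OF s' s0 g gb] in simp)
  qed
  have "X_integral sm P M g = y"
    unfolding X_integral_def good_seq_def[symmetric]
  proof (rule the_equality)
    show "\<forall>s. good_seq M g s \<longrightarrow> (\<lambda>k. simple_int sm P M (s k)) \<longlonglongrightarrow> y"
      using all by blast
    then show "\<And>y'. \<forall>s. good_seq M g s \<longrightarrow> (\<lambda>k. simple_int sm P M (s k)) \<longlonglongrightarrow> y' \<Longrightarrow> y' = y"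
      using s0 y LIMSEQ_unique by blast
  qed
  with all[OF s] show ?thesis by simp
qed

end



definition near :: "'a::metric_space list \<Rightarrow> 'a \<Rightarrow> nat" where
  "near zs t = (LEAST i. i < length zs \<and> (\<forall>j<length zs. dist t (zs!i) \<le> dist t (zs!j)))"

lemma near_ex: assumes "zs \<noteq> []"
  shows "\<exists>i. i < length zs \<and> (\<forall>j<length zs. dist t (zs!i) \<le> dist t (zs!j))"
proof -
  let ?S = "(\<lambda>j. dist t (zs!j)) ` {..<length zs}"
  have "finite ?S" "?S \<noteq> {}" using assms by auto
  then have "Min ?S \<in> ?S" by (rule Min_in)
  then obtain i where i: "i < length zs" "Min ?S = dist t (zs!i)" by auto
  have "\<forall>j<length zs. dist t (zs!i) \<le> dist t (zs!j)"
  proof (intro allI impI)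
    fix j assume "j < length zs"
    then have "dist t (zs!j) \<in> ?S" by blast
    then have "Min ?S \<le> dist t (zs!j)" using `finite ?S` by (rule Min_le[rotated])
    then show "dist t (zs!i) \<le> dist t (zs!j)" using i by simp
  qed
  then show ?thesis using i by blast
qed

lemma near_prop: assumes "zs \<noteq> []"
  shows "near zs t < length zs \<and> (\<forall>j<length zs. dist t (zs ! near zs t) \<le> dist t (zs!j))"
  unfolding near_def by (rule LeastI_ex[OF near_ex[OF assms]])

lemma near_lt: "zs \<noteq> [] \<Longrightarrow> near zs t < length zs"
  using near_prop by blast

lemma near_min: "zs \<noteq> [] \<Longrightarrow> j < length zs \<Longrightarrow> dist t (zs ! near zs t) \<le> dist t (zs!j)"
  using near_prop by blast

lemma near_least: assumes "i < near zs t" "zs \<noteq> []"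
  shows "\<not> (\<forall>j<length zs. dist t (zs!i) \<le> dist t (zs!j))"
proof -
  have "i < (LEAST i. i < length zs \<and> (\<forall>j<length zs. dist t (zs!i) \<le> dist t (zs!j)))"
    using assms(1) unfolding near_def .
  then have "\<not> (i < length zs \<and> (\<forall>j<length zs. dist t (zs!i) \<le> dist t (zs!j)))"
    by (rule not_less_Least)
  moreover have "i < length zs" using near_lt[OF assms(2), of t] assms(1) by linarith
  ultimately show ?thesis by blast
qed

lemma near_eqI: assumes "i < length zs" "\<forall>j<length zs. dist t (zs!i) \<le> dist t (zs!j)"
   "\<forall>i'<i. \<not> (\<forall>j<length zs. dist t (zs!i') \<le> dist t (zs!j))"
  shows "near zs t = i"
  unfolding near_def
proof (rule Least_equality)
  show "i < length zs \<and> (\<forall>j<length zs. dist t (zs!i) \<le> dist t (zs!j))" using assms(1,2) by blast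
  fix y assume "y < length zs \<and> (\<forall>j<length zs. dist t (zs!y) \<le> dist t (zs!j))"
  then show "i \<le> y" using assms(3) not_le by blast
qed

lemma near_vor: assumes "zs \<noteq> []" "i < length zs"
  shows "{t\<in>T. near zs t = i} = vor_part T zs i"
proof -
  have til: "t \<in> vor_tilde T zs i' \<longleftrightarrow> t \<in> T \<and> (\<forall>j<length zs. dist t (zs!i') \<le> dist t (zs!j))" for t i'
  proof -
    have "(\<forall>j<length zs. j \<noteq> i' \<longrightarrow> dist t (zs!i') \<le> dist t (zs!j)) \<longleftrightarrow>
          (\<forall>j<length zs. dist t (zs!i') \<le> dist t (zs!j))"
      by (metis order_refl)
    then show ?thesis unfolding vor_tilde_def by blast
  qed
  show ?thesis
  proof (intro set_eqI iffI)
    fix t assume t: "t \<in> {t\<in>T. near zs t = i}"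
    then have "t \<in> vor_tilde T zs i" using til near_min[OF assms(1)] by blast
    moreover have "t \<notin> vor_tilde T zs i'" if "i' < i" for i'
      using til near_least[OF _ assms(1), of i' t] t that by blast
    ultimately show "t \<in> vor_part T zs i" unfolding vor_part_def by blast
  next
    fix t assume "t \<in> vor_part T zs i"
    then have "t \<in> vor_tilde T zs i" "\<forall>i'<i. t \<notin> vor_tilde T zs i'"
      unfolding vor_part_def by blast+
    then have "t \<in> T" "\<forall>j<length zs. dist t (zs!i) \<le> dist t (zs!j)"
      "\<forall>i'<i. \<not> (\<forall>j<length zs. dist t (zs!i') \<le> dist t (zs!j))"
      using til by blast+
    then show "t \<in> {t\<in>T. near zs t = i}" using near_eqI[OF assms(2)] by blast
  qed
qed

definition kap :: "'a set \<Rightarrow> 'a::metric_space list \<Rightarrow> 'a \<Rightarrow> nat option" where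
  "kap Q zs t = (if t \<in> Q then Some (near zs t) else None)"

definition resf :: "'a set \<Rightarrow> ('a \<Rightarrow> 'y::zero) \<Rightarrow> 'a \<Rightarrow> 'y" where
  "resf Q F t = (if t \<in> Q then F t else 0)"

locale MT = MS sm P M for sm :: "real \<Rightarrow> 'x::{comm_monoid_add,complete_space} \<Rightarrow> 'x" and P
   and M :: "'a::metric_space measure" +
  fixes T Q :: "'a set" and \<omega> :: "real \<Rightarrow> real"
  assumes spM: "space M = T" and setsM: "sets M = sets (restrict_space borel T)"
    and cT: "compact T" and QT: "Q \<subseteq> T" and cQ: "compact Q"
    and om: "modulus_of_continuity \<omega>" and Tne: "T \<noteq> {}"
begin

lemma om_mono: "0 \<le> a \<Longrightarrow> a \<le> b \<Longrightarrow> \<omega> a \<le> \<omega> b"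
  using om unfolding modulus_of_continuity_def mono_on_def by auto
lemma om_nonneg: "0 \<le> a \<Longrightarrow> 0 \<le> \<omega> a"
  using om unfolding modulus_of_continuity_def by auto
lemma om_0: "\<omega> 0 = 0"
  using om unfolding modulus_of_continuity_def by auto
lemma om_sub: "0 \<le> a \<Longrightarrow> 0 \<le> b \<Longrightarrow> \<omega> (a + b) \<le> \<omega> a + \<omega> b"
  using om unfolding modulus_of_continuity_def by auto
lemma om_lim: "(\<lambda>k. \<omega> (1 / real (Suc k))) \<longlonglongrightarrow> 0"
proof -
  have c: "continuous_on {0..} \<omega>" using om unfolding modulus_of_continuity_def by auto
  have l: "(\<lambda>k. 1 / real (Suc k)) \<longlonglongrightarrow> 0"
    using LIMSEQ_Suc[OF lim_inverse_n'] by simp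
  have "(\<lambda>k. \<omega> (1 / real (Suc k))) \<longlonglongrightarrow> \<omega> 0"
    by (rule continuous_on_tendsto_compose[OF c l]) auto
  then show ?thesis by (simp add: om_0)
qed

lemma closed_sets: "closed C \<Longrightarrow> C \<inter> T \<in> sets M"
proof -
  assume "closed C"
  have cT': "T \<inter> space borel \<in> sets borel" using compact_imp_closed[OF cT] by auto
  show "C \<inter> T \<in> sets M" unfolding setsM sets_restrict_space_iff[OF cT']
    using `closed C` compact_imp_closed[OF cT] by auto
qed

lemma Q_sets: "Q \<in> sets M"
  using closed_sets[OF compact_imp_closed[OF cQ]] QT by (simp add: Int_absorb2)

lemma tilde_sets: "vor_tilde T zs i \<in> sets M"
proof -
  have "vor_tilde T zs i = (\<Inter>j\<in>{j. j < length zs \<and> j \<noteq> i}. {t. dist t (zs!i) \<le> dist t (zs!j)}) \<inter> T"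
    unfolding vor_tilde_def by auto
  also have "\<dots> \<in> sets M"
    by (intro closed_sets closed_INT allI ballI closed_Collect_le continuous_intros)
  finally show ?thesis .
qed

lemma near_sets: assumes "zs \<noteq> []" shows "{t\<in>space M. near zs t = i} \<in> sets M"
proof (cases "i < length zs")
  case True
  then show ?thesis unfolding spM near_vor[OF assms True] vor_part_def
    by (intro sets.Diff sets.finite_UN tilde_sets) auto
next
  case False
  then have e: "{t\<in>space M. near zs t = i} = {}" using near_lt[OF assms] by fastforce
  show ?thesis unfolding e by simp
qed

lemma kap_fin: assumes "zs \<noteq> []" shows "finite (kap Q zs ` space M)"
proof (rule finite_subset)
  show "kap Q zs ` space M \<subseteq> insert None (Some ` {..<length zs})"
    using near_lt[OF assms] by (auto simp: kap_def)
qed auto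

lemma kap_sets: assumes "zs \<noteq> []" shows "{t\<in>space M. kap Q zs t = j} \<in> sets M"
proof (cases j)
  case None
  then have "{t\<in>space M. kap Q zs t = j} = space M - Q" by (auto simp: kap_def)
  then show ?thesis using Q_sets by auto
next
  case (Some i)
  then have "{t\<in>space M. kap Q zs t = j} = {t\<in>space M. near zs t = i} \<inter> Q" by (auto simp: kap_def)
  then show ?thesis using Q_sets near_sets[OF assms] by auto
qed

lemma nets_ex: "\<exists>Z. \<forall>k. Z k \<noteq> [] \<and> set (Z k) \<subseteq> T \<and> (\<forall>t\<in>T. \<exists>z\<in>set (Z k). dist t z < 1 / real (Suc k))"
proof -
  have "\<exists>zs. zs \<noteq> [] \<and> set zs \<subseteq> T \<and> (\<forall>t\<in>T. \<exists>z\<in>set zs. dist t z < 1 / real (Suc k))" for k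
  proof -
    have pos: "1 / real (Suc k) > 0" by simp
    have "\<exists>K. finite K \<and> K \<subseteq> T \<and> T \<subseteq> (\<Union>x\<in>K. ball x (1 / real (Suc k)))"
      using seq_compact_imp_totally_bounded[OF compact_imp_seq_compact[OF cT], rule_format, OF pos] .
    then obtain K where K: "finite K" "K \<subseteq> T" "T \<subseteq> (\<Union>x\<in>K. ball x (1 / real (Suc k)))"
      by (elim exE conjE)
    obtain zs where zs: "set zs = K" using finite_list[OF K(1)] by blast
    have "zs \<noteq> []"
    proof
      assume "zs = []"
      then have "K = {}" using zs by simp
      then show False using K(3) Tne by simp
    qed
    moreover have "\<forall>t\<in>T. \<exists>z\<in>set zs. dist t z < 1 / real (Suc k)"
    proof
      fix t assume "t \<in> T"
      then obtain x where "x \<in> K" "t \<in> ball x (1 / real (Suc k))" using K(3) by blast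
      then have "x \<in> set zs" "dist t x < 1 / real (Suc k)" using zs by (auto simp: dist_commute)
      then show "\<exists>z\<in>set zs. dist t z < 1 / real (Suc k)" by blast
    qed
    ultimately show ?thesis using zs K(2) by blast
  qed
  then have "\<forall>k. \<exists>zs. zs \<noteq> [] \<and> set zs \<subseteq> T \<and> (\<forall>t\<in>T. \<exists>z\<in>set zs. dist t z < 1 / real (Suc k))"
    by blast
  then show ?thesis by (rule choice)
qed

definition Znet :: "nat \<Rightarrow> 'a list" where
  "Znet = (SOME Z. \<forall>k. Z k \<noteq> [] \<and> set (Z k) \<subseteq> T \<and> (\<forall>t\<in>T. \<exists>z\<in>set (Z k). dist t z < 1 / real (Suc k)))"

lemma Znet: "Znet k \<noteq> []" "set (Znet k) \<subseteq> T" "t \<in> T \<Longrightarrow> \<exists>z\<in>set (Znet k). dist t z < 1 / real (Suc k)"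
  using someI_ex[OF nets_ex] unfolding Znet_def[symmetric] by blast+

lemma Znet_in: "Znet k ! near (Znet k) t \<in> T"
  using Znet(1,2) near_lt[OF Znet(1)] nth_mem by blast

lemma Znet_close: assumes "t \<in> T" shows "dist t (Znet k ! near (Znet k) t) < 1 / real (Suc k)"
proof -
  obtain z where z: "z \<in> set (Znet k)" "dist t z < 1 / real (Suc k)" using Znet(3)[OF assms] by blast
  then obtain j where j: "j < length (Znet k)" "z = Znet k ! j" by (auto simp: in_set_conv_nth)
  have "dist t (Znet k ! near (Znet k) t) \<le> dist t (Znet k ! j)" by (rule near_min[OF Znet(1) j(1)])
  then show ?thesis using j z by simp
qed

lemma H_conv: assumes F: "F \<in> Hclass T \<omega>" and t: "t \<in> T"
  shows "(\<lambda>k. F (Znet k ! near (Znet k) t)) \<longlonglongrightarrow> F t"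
proof -
  have "dist (F (Znet k ! near (Znet k) t)) (F t) \<le> \<omega> (1 / real (Suc k))" for k
  proof -
    have "dist (F (Znet k ! near (Znet k) t)) (F t) \<le> \<omega> (dist (Znet k ! near (Znet k) t) t)"
      using F Znet_in t unfolding Hclass_def by blast
    also have "\<dots> \<le> \<omega> (1 / real (Suc k))"
      using Znet_close[OF t, of k] by (intro om_mono) (auto simp: dist_commute)
    finally show ?thesis .
  qed
  then have "(\<lambda>k. dist (F (Znet k ! near (Znet k) t)) (F t)) \<longlonglongrightarrow> 0"
    by (intro Lim_null_comparison[OF _ om_lim] always_eventually allI) simp
  then show ?thesis by (rule tendsto_dist_iff[THEN iffD2])
qed

lemma H_bound: assumes F: "F \<in> Hclass T \<omega>" and t0: "t0 \<in> T"
  shows "\<exists>C. \<forall>t\<in>T. dist (F t) (F t0) \<le> C"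
proof -
  obtain e where e: "\<forall>y\<in>T. dist t0 y \<le> e"
    using compact_imp_bounded[OF cT] bounded_any_center by blast
  have "dist (F t) (F t0) \<le> \<omega> e" if "t \<in> T" for t
  proof -
    have "dist (F t) (F t0) \<le> \<omega> (dist t t0)" using F that t0 unfolding Hclass_def by blast
    also have "\<dots> \<le> \<omega> e" using e that by (intro om_mono) (auto simp: dist_commute)
    finally show ?thesis .
  qed
  then show ?thesis by blast
qed

definition apx :: "('a \<Rightarrow> 'y::zero) \<Rightarrow> nat \<Rightarrow> 'a \<Rightarrow> 'y" where
  "apx F k = (\<lambda>t. case_option 0 (\<lambda>i. F (Znet k ! i)) (kap Q (Znet k) t))"

lemma apx_simple: "simple_X M (apx F k)"
  unfolding apx_def by (intro rep_simple kap_fin kap_sets Znet(1))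

lemma apx_eq: "apx F k t = (if t \<in> Q then F (Znet k ! near (Znet k) t) else 0)"
  unfolding apx_def kap_def by simp

lemma apx_conv: assumes "F \<in> Hclass T \<omega>" "t \<in> space M"
  shows "(\<lambda>k. apx F k t) \<longlonglongrightarrow> resf Q F t"
  using H_conv[OF assms(1)] assms(2) QT spM by (auto simp: apx_eq resf_def)

lemma res_meas: assumes "F \<in> Hclass T \<omega>" shows "resf Q F \<in> borel_measurable M"
  by (rule borel_measurable_LIMSEQ_metric[OF simple_X_meas[OF apx_simple] apx_conv[OF assms]])

lemma res_bound: assumes "(F :: 'a \<Rightarrow> 'y::{zero,metric_space}) \<in> Hclass T \<omega>"
  shows "\<exists>C. (\<forall>t\<in>space M. dist (resf Q F t) 0 \<le> C) \<and> (\<forall>k. \<forall>t\<in>space M. dist (apx F k t) 0 \<le> C)"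
proof -
  obtain t0 where t0: "t0 \<in> T" using Tne by blast
  obtain C where C: "\<forall>t\<in>T. dist (F t) (F t0) \<le> C" using H_bound[OF assms t0] by blast
  have C0: "0 \<le> C" using C t0 by (metis dist_self)
  have b: "dist (F t) 0 \<le> C + dist (F t0) 0" if "t \<in> T" for t
    using C that dist_triangle[of "F t" 0 "F t0"] by fastforce
  show ?thesis
  proof (intro exI[of _ "C + dist (F t0) 0"] conjI ballI allI)
    fix t assume "t \<in> space M"
    then show "dist (resf Q F t) 0 \<le> C + dist (F t0) 0" using b C0 spM by (auto simp: resf_def)
  next
    fix k t assume "t \<in> space M"
    then show "dist (apx F k t) 0 \<le> C + dist (F t0) 0" using b C0 Znet_in by (auto simp: apx_eq)
  qed
qed

lemma apx_good: assumes "(F :: 'a \<Rightarrow> 'y::{zero,metric_space}) \<in> Hclass T \<omega>"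
  shows "good_seq M (resf Q F) (apx F)"
  unfolding good_seq_def
  using apx_simple res_bound[OF assms] apx_conv[OF assms] by (auto intro!: AE_I2)

lemma X_int_res: assumes "(F :: 'a \<Rightarrow> 'x) \<in> Hclass T \<omega>"
  shows "(\<lambda>k. simple_int sm P M (apx F k)) \<longlonglongrightarrow> X_integral sm P M (resf Q F)"
proof -
  obtain C where C: "\<forall>t\<in>space M. dist (resf Q F t) 0 \<le> C" using res_bound[OF assms] by blast
  show ?thesis by (rule X_int_lim[OF res_meas[OF assms] C apx_good[OF assms] apx_good[OF assms]])
qed

lemma real_int_res: assumes "(F :: 'a \<Rightarrow> real) \<in> Hclass T \<omega>"
  shows "(\<lambda>k. integral\<^sup>L M (apx F k)) \<longlonglongrightarrow> integral\<^sup>L M (resf Q F)"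
    and "integrable M (resf Q F)"
proof -
  obtain C where C: "\<forall>t\<in>space M. dist (resf Q F t) 0 \<le> C" "\<forall>k. \<forall>t\<in>space M. dist (apx F k t) 0 \<le> C"
    using res_bound[OF assms] by blast
  show "(\<lambda>k. integral\<^sup>L M (apx F k)) \<longlonglongrightarrow> integral\<^sup>L M (resf Q F)"
  proof (rule integral_dominated_convergence[where w="\<lambda>_. C"])
    show "resf Q F \<in> borel_measurable M" by (rule res_meas[OF assms])
    show "apx F k \<in> borel_measurable M" for k by (rule simple_X_meas[OF apx_simple])
    show "integrable M (\<lambda>_. C)" by (rule finite_measure.integrable_const[OF fin])
    show "AE t in M. (\<lambda>k. apx F k t) \<longlonglongrightarrow> resf Q F t" using apx_conv[OF assms] by (intro AE_I2)
    show "AE t in M. norm (apx F k t) \<le> C" for k using C by (intro AE_I2) auto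
  qed
  show "integrable M (resf Q F)"
    using C(1) by (intro finite_measure.integrable_const_bound[OF fin, where B=C] AE_I2 res_meas[OF assms]) auto
qed

end



context MT
begin

definition mfun :: "'a list \<Rightarrow> 'a \<Rightarrow> real" where
  "mfun xs t = Min ((\<lambda>x. \<omega> (dist x t)) ` set xs)"

lemma m_le: "x \<in> set xs \<Longrightarrow> mfun xs t \<le> \<omega> (dist x t)"
  unfolding mfun_def by (rule Min_le) auto

lemma m_attained: "xs \<noteq> [] \<Longrightarrow> \<exists>x\<in>set xs. mfun xs t = \<omega> (dist x t)"
proof -
  assume "xs \<noteq> []"
  then have "mfun xs t \<in> (\<lambda>x. \<omega> (dist x t)) ` set xs" unfolding mfun_def by (intro Min_in) auto
  then show ?thesis by auto
qed

lemma m_nonneg: assumes "xs \<noteq> []" shows "0 \<le> mfun xs t"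
proof -
  obtain x where "x \<in> set xs" "mfun xs t = \<omega> (dist x t)" using m_attained[OF assms] by blast
  then show ?thesis using om_nonneg[OF zero_le_dist[of x t]] by simp
qed

lemma m_zero: assumes "x \<in> set xs" shows "mfun xs x = 0"
proof -
  have "xs \<noteq> []" using assms by auto
  then have "0 \<le> mfun xs x" by (rule m_nonneg)
  moreover have "mfun xs x \<le> \<omega> (dist x x)" by (rule m_le[OF assms])
  ultimately show ?thesis using om_0 by simp
qed

lemma m_H: assumes "xs \<noteq> []" shows "mfun xs \<in> Hclass T \<omega>"
proof -
  have one: "mfun xs s \<le> mfun xs t + \<omega> (dist s t)" for s t
  proof -
    obtain x where x: "x \<in> set xs" "mfun xs t = \<omega> (dist x t)" using m_attained[OF assms] by blast
    have "mfun xs s \<le> \<omega> (dist x s)" by (rule m_le[OF x(1)])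
    also have "\<dots> \<le> \<omega> (dist x t + dist s t)"
      by (rule om_mono[OF zero_le_dist dist_triangle2])
    also have "\<dots> \<le> \<omega> (dist x t) + \<omega> (dist s t)" by (rule om_sub[OF zero_le_dist zero_le_dist])
    finally show ?thesis using x by simp
  qed
  show ?thesis unfolding Hclass_def
  proof (intro CollectI ballI)
    fix s t :: 'a
    have "dist t s = dist s t" by (rule dist_commute)
    then have "mfun xs s \<le> mfun xs t + \<omega> (dist s t)" "mfun xs t \<le> mfun xs s + \<omega> (dist s t)"
      using one[of s t] one[of t s] by auto
    then show "dist (mfun xs s) (mfun xs t) \<le> \<omega> (dist s t)" by (simp add: dist_real_def)
  qed
qed

lemma H_bound0: assumes "(F :: 'a \<Rightarrow> 'y::{zero,metric_space}) \<in> Hclass T \<omega>"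
  shows "\<exists>C\<ge>0. \<forall>t\<in>T. dist (F t) 0 \<le> C"
proof -
  obtain t0 where t0: "t0 \<in> T" using Tne by blast
  obtain C where C: "\<forall>t\<in>T. dist (F t) (F t0) \<le> C" using H_bound[OF assms t0] by blast
  have C0: "0 \<le> C" using C t0 by (metis dist_self)
  have "dist (F t) 0 \<le> C + dist (F t0) 0" if "t \<in> T" for t
    using C that dist_triangle[of "F t" 0 "F t0"] by fastforce
  then show ?thesis using C0 by (intro exI[of _ "C + dist (F t0) 0"]) auto
qed

lemma resf_fun: "resf Q f = (\<lambda>t. if t \<in> Q then f t else 0)"
  by (rule ext) (simp add: resf_def)

lemma set_int_m: "(LINT t:Q|M. g t) = integral\<^sup>L M (resf Q (g :: 'a \<Rightarrow> real))"
  unfolding set_lebesgue_integral_def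
  by (intro Bochner_Integration.integral_cong) (auto simp: resf_def indicator_def)

lemma upper:
  assumes f: "(f :: 'a \<Rightarrow> 'x) \<in> Hclass T \<omega>" and xs: "xs \<noteq> []" "set xs \<subseteq> T"
  shows "dist (set_X_integral sm P M Q f)
     (\<Sum>i<length xs. sm (measure M (vor_part T xs i \<inter> Q)) (map (\<lambda>x. P (f x)) xs ! i))
     \<le> (LINT t:Q|M. mfun xs t)"
proof -
  define F' where "F' = case_option 0 (\<lambda>i. f (xs ! i))"
  define q where "q t = F' (kap Q xs t)" for t
  let ?K = "kap Q xs ` space M"
  let ?h = "\<lambda>j. sm (measure M {t\<in>space M. kap Q xs t = j}) (P (F' j))"
  have qs: "simple_X M q" unfolding q_def by (intro rep_simple kap_fin kap_sets xs(1))
  have q_int: "simple_int sm P M q = (\<Sum>j\<in>?K. ?h j)"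
    unfolding q_def by (intro rep_int kap_fin kap_sets xs(1))
  have "(\<Sum>j\<in>?K. ?h j) = (\<Sum>j\<in>insert None (Some ` {..<length xs}). ?h j)"
  proof (rule sum.mono_neutral_left)
    show "finite (insert None (Some ` {..<length xs}))" by simp
    show "?K \<subseteq> insert None (Some ` {..<length xs})" using near_lt[OF xs(1)] by (auto simp: kap_def)
    show "\<forall>j\<in>insert None (Some ` {..<length xs}) - ?K. ?h j = 0"
    proof
      fix j assume "j \<in> insert None (Some ` {..<length xs}) - ?K"
      then have e: "{t\<in>space M. kap Q xs t = j} = {}" by auto
      show "?h j = 0" unfolding e by (simp add: sm_0)
    qed
  qed
  also have "\<dots> = ?h None + (\<Sum>i<length xs. ?h (Some i))"
    by (subst sum.insert) (auto simp: sum.reindex)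
  also have "\<dots> = (\<Sum>i<length xs. sm (measure M (vor_part T xs i \<inter> Q)) (map (\<lambda>x. P (f x)) xs ! i))"
  proof -
    have "?h None = 0" by (simp add: F'_def P_zero sm_zero)
    moreover have "?h (Some i) = sm (measure M (vor_part T xs i \<inter> Q)) (map (\<lambda>x. P (f x)) xs ! i)"
      if "i < length xs" for i
    proof -
      have "{t\<in>space M. kap Q xs t = Some i} = {t\<in>T. near xs t = i} \<inter> Q"
        using spM by (auto simp: kap_def)
      then have "{t\<in>space M. kap Q xs t = Some i} = vor_part T xs i \<inter> Q"
        using near_vor[OF xs(1) that] by simp
      then show ?thesis using that by (simp add: F'_def)
    qed
    ultimately show ?thesis by simp
  qed
  finally have phi: "(\<Sum>i<length xs. sm (measure M (vor_part T xs i \<inter> Q)) (map (\<lambda>x. P (f x)) xs ! i))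
      = simple_int sm P M q" using q_int by simp
  have Lam: "set_X_integral sm P M Q f = X_integral sm P M (resf Q f)"
    unfolding set_X_integral_def resf_fun ..
  obtain C where C0: "C \<ge> 0" and C: "\<forall>t\<in>T. dist (f t) 0 \<le> C" using H_bound0[OF f] by blast
  have qb: "dist (q t) 0 \<le> C" if "t \<in> space M" for t
  proof -
    have "xs ! near xs t \<in> T" using xs(2) nth_mem[OF near_lt[OF xs(1)]] by blast
    then show ?thesis using C C0 by (auto simp: q_def F'_def kap_def)
  qed
  have rb: "dist (resf Q f t) 0 \<le> C" if "t \<in> space M" for t
    using C C0 that spM by (auto simp: resf_def)
  have ab: "dist (apx f k t) 0 \<le> C" if "t \<in> space M" for t k
    using C C0 Znet_in by (auto simp: apx_eq)
  have dm: "(\<lambda>t. dist (resf Q f t) (q t)) \<in> borel_measurable M"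
    using simple_dist_meas[OF qs res_meas[OF f]] by (simp add: dist_commute)
  have lim1: "(\<lambda>k. integral\<^sup>L M (\<lambda>t. dist (apx f k t) (q t))) \<longlonglongrightarrow> integral\<^sup>L M (\<lambda>t. dist (resf Q f t) (q t))"
  proof (rule integral_dominated_convergence[where w="\<lambda>_. 2 * C"])
    show "(\<lambda>t. dist (resf Q f t) (q t)) \<in> borel_measurable M" by (rule dm)
    show "(\<lambda>t. dist (apx f k t) (q t)) \<in> borel_measurable M" for k
      by (rule simple_dist_meas[OF apx_simple simple_X_meas[OF qs]])
    show "integrable M (\<lambda>_. 2 * C)" by (rule finite_measure.integrable_const[OF fin])
    show "AE t in M. (\<lambda>k. dist (apx f k t) (q t)) \<longlonglongrightarrow> dist (resf Q f t) (q t)"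
      by (intro AE_I2 tendsto_dist apx_conv[OF f] tendsto_const)
    show "AE t in M. norm (dist (apx f k t) (q t)) \<le> 2 * C" for k
    proof (intro AE_I2)
      fix t assume t: "t \<in> space M"
      have "dist (apx f k t) (q t) \<le> dist (apx f k t) 0 + dist (q t) 0" by (rule dist_triangle2)
      moreover have "dist (apx f k t) 0 \<le> C" by (rule ab[of t k, OF t])
      ultimately show "norm (dist (apx f k t) (q t)) \<le> 2 * C" using qb[OF t] by simp
    qed
  qed
  have lim2: "(\<lambda>k. dist (simple_int sm P M (apx f k)) (simple_int sm P M q))
      \<longlonglongrightarrow> dist (X_integral sm P M (resf Q f)) (simple_int sm P M q)"
    by (intro tendsto_dist X_int_res[OF f] tendsto_const)
  have "dist (X_integral sm P M (resf Q f)) (simple_int sm P M q) \<le> integral\<^sup>L M (\<lambda>t. dist (resf Q f t) (q t))"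
    by (rule LIMSEQ_le[OF lim2 lim1]) (auto intro: dist_simple[OF apx_simple qs])
  also have "\<dots> \<le> integral\<^sup>L M (resf Q (mfun xs))"
  proof (rule integral_mono)
    show "integrable M (\<lambda>t. dist (resf Q f t) (q t))"
    proof (rule finite_measure.integrable_const_bound[OF fin, where B="2 * C"])
      show "AE t in M. norm (dist (resf Q f t) (q t)) \<le> 2 * C"
      proof (intro AE_I2)
        fix t assume t: "t \<in> space M"
        have "dist (resf Q f t) (q t) \<le> dist (resf Q f t) 0 + dist (q t) 0" by (rule dist_triangle2)
        then show "norm (dist (resf Q f t) (q t)) \<le> 2 * C" using rb[OF t] qb[OF t] by simp
      qed
    qed (rule dm)
    show "integrable M (resf Q (mfun xs))" by (rule real_int_res(2)[OF m_H[OF xs(1)]])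
    fix t assume t: "t \<in> space M"
    show "dist (resf Q f t) (q t) \<le> resf Q (mfun xs) t"
    proof (cases "t \<in> Q")
      case False then show ?thesis by (simp add: resf_def q_def kap_def F'_def)
    next
      case True
      let ?i = "near xs t"
      have i: "?i < length xs" by (rule near_lt[OF xs(1)])
      have tT: "t \<in> T" using t spM by simp
      have "dist (f t) (f (xs ! ?i)) \<le> \<omega> (dist t (xs ! ?i))"
        using f tT xs(2) i nth_mem unfolding Hclass_def by blast
      also have "\<dots> \<le> mfun xs t"
        unfolding mfun_def
      proof (rule Min.boundedI)
        show "finite ((\<lambda>x. \<omega> (dist x t)) ` set xs)" by simp
        show "(\<lambda>x. \<omega> (dist x t)) ` set xs \<noteq> {}" using xs(1) by simp
        fix a assume "a \<in> (\<lambda>x. \<omega> (dist x t)) ` set xs"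
        then obtain j where j: "j < length xs" "a = \<omega> (dist (xs ! j) t)"
          by (auto simp: in_set_conv_nth)
        have "dist t (xs ! ?i) \<le> dist t (xs ! j)" by (rule near_min[OF xs(1) j(1)])
        then show "\<omega> (dist t (xs ! ?i)) \<le> a" using j by (simp add: om_mono dist_commute)
      qed
      finally show ?thesis using True by (simp add: resf_def q_def kap_def F'_def)
    qed
  qed
  also have "\<dots> = (LINT t:Q|M. mfun xs t)" by (rule set_int_m[symmetric])
  finally show ?thesis unfolding Lam phi .
qed

end



context MT
begin

lemma apx_int_real:
  "integral\<^sup>L M (apx \<phi> k) = (\<Sum>j\<in>kap Q (Znet k) ` space M.
      measure M {t\<in>space M. kap Q (Znet k) t = j} * case_option 0 (\<lambda>i. \<phi> (Znet k ! i)) j)"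
  unfolding apx_def by (rule rep_real[OF fin kap_fin[OF Znet(1)] kap_sets[OF Znet(1)]])

lemma kap_img_T: "j \<in> kap Q (Znet k) ` space M \<Longrightarrow> j = Some i \<Longrightarrow> Znet k ! i \<in> T"
  using Znet_in by (auto simp: kap_def)

lemma apx_scal:
  assumes e: "e \<in> convex_elems sm" and nn: "\<forall>t\<in>T. 0 \<le> \<phi> t"
  shows "simple_int sm P M (apx (\<lambda>t. sm (\<phi> t) e) k) = sm (integral\<^sup>L M (apx \<phi> k)) e"
proof -
  let ?K = "kap Q (Znet k) ` space M"
  let ?mu = "\<lambda>j. measure M {t\<in>space M. kap Q (Znet k) t = j}"
  let ?h = "\<lambda>j. case_option 0 (\<lambda>i. \<phi> (Znet k ! i)) j"
  have "simple_int sm P M (apx (\<lambda>t. sm (\<phi> t) e) k) =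
      (\<Sum>j\<in>?K. sm (?mu j) (P (case_option 0 (\<lambda>i. sm (\<phi> (Znet k ! i)) e) j)))"
    unfolding apx_def by (rule rep_int[OF kap_fin[OF Znet(1)] kap_sets[OF Znet(1)]])
  also have "\<dots> = (\<Sum>j\<in>?K. sm (?mu j * ?h j) e)"
  proof (rule sum.cong[OF refl])
    fix j assume "j \<in> ?K"
    show "sm (?mu j) (P (case_option 0 (\<lambda>i. sm (\<phi> (Znet k ! i)) e) j)) = sm (?mu j * ?h j) e"
    proof (cases j)
      case None then show ?thesis by (simp add: P_zero sm_zero sm_0)
    next
      case (Some i) then show ?thesis by (simp add: P_sm convex_P[OF e] sm_sm)
    qed
  qed
  also have "\<dots> = sm (\<Sum>j\<in>?K. ?mu j * ?h j) e"
  proof (rule conv_sum[OF e, symmetric])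
    fix j assume j: "j \<in> ?K"
    have "0 \<le> ?h j"
    proof (cases j)
      case (Some i) then show ?thesis using nn kap_img_T[OF j Some] by simp
    qed simp
    then show "0 \<le> ?mu j * ?h j" by simp
  qed
  also have "\<dots> = sm (integral\<^sup>L M (apx \<phi> k)) e" by (simp add: apx_int_real)
  finally show ?thesis .
qed

lemma scal_H:
  assumes e: "e \<in> convex_elems sm" and nn: "\<forall>t\<in>T. 0 \<le> \<phi> t"
    and L: "\<forall>s\<in>T. \<forall>t\<in>T. \<bar>\<phi> s - \<phi> t\<bar> * dist e 0 \<le> \<omega> (dist s t)"
  shows "(\<lambda>t. sm (\<phi> t) e) \<in> Hclass T \<omega>"
  unfolding Hclass_def
proof (intro CollectI ballI)
  fix s t assume s: "s \<in> T" and t: "t \<in> T"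
  have "dist (sm (\<phi> s) e) (sm (\<phi> t) e) \<le> \<bar>\<phi> s - \<phi> t\<bar> * dist e 0"
    using nn s t by (intro dist_scal_abs[OF e]) auto
  also have "\<dots> \<le> \<omega> (dist s t)" using L s t by blast
  finally show "dist (sm (\<phi> s) e) (sm (\<phi> t) e) \<le> \<omega> (dist s t)" .
qed

lemma lower:
  assumes e: "e \<in> inv_elems" "e \<in> convex_elems sm" "e \<noteq> 0" and xs: "xs \<noteq> []" "set xs \<subseteq> T"
  shows "ereal (LINT t:Q|M. mfun xs t) \<le>
     rec_error (set_X_integral sm P M Q) (Hclass T \<omega>) (\<lambda>f. map (\<lambda>x. P (f x)) xs) \<Phi>"
proof -
  define c where "c = dist e 0"
  have c0: "0 < c" using e(3) by (simp add: c_def)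
  obtain B where B0: "B \<ge> 0" and B: "\<forall>t\<in>T. dist (mfun xs t) 0 \<le> B"
    using H_bound0[OF m_H[OF xs(1)]] by (elim exE conjE)
  have mB: "mfun xs t \<le> B" "0 \<le> mfun xs t" if "t \<in> T" for t
  proof -
    show "0 \<le> mfun xs t" by (rule m_nonneg[OF xs(1)])
    have "dist (mfun xs t) 0 \<le> B" using B that by blast
    then show "mfun xs t \<le> B" by (simp add: dist_real_def)
  qed
  have mL: "\<bar>mfun xs s - mfun xs t\<bar> \<le> \<omega> (dist s t)" if "s \<in> T" "t \<in> T" for s t
  proof -
    have "dist (mfun xs s) (mfun xs t) \<le> \<omega> (dist s t)"
      using m_H[OF xs(1)] that unfolding Hclass_def by blast
    then show ?thesis by (simp add: dist_real_def)
  qed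
  define K where "K = B / c"
  define \<phi>1 where "\<phi>1 t = K + mfun xs t / c" for t
  define \<phi>2 where "\<phi>2 t = K - mfun xs t / c" for t
  define f1 where "f1 t = sm (\<phi>1 t) e" for t
  define f2 where "f2 t = sm (\<phi>2 t) e" for t
  have n1: "\<forall>t\<in>T. 0 \<le> \<phi>1 t"
  proof
    fix t assume "t \<in> T"
    then have "0 \<le> mfun xs t / c" "0 \<le> B / c" using mB B0 c0 by auto
    then show "0 \<le> \<phi>1 t" by (simp add: \<phi>1_def K_def)
  qed
  have n2: "\<forall>t\<in>T. 0 \<le> \<phi>2 t"
  proof
    fix t assume "t \<in> T"
    then have "mfun xs t / c \<le> B / c" using mB c0 by (intro divide_right_mono) auto
    then show "0 \<le> \<phi>2 t" by (simp add: \<phi>2_def K_def)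
  qed
  have d1: "\<bar>\<phi>1 s - \<phi>1 t\<bar> * c = \<bar>mfun xs s - mfun xs t\<bar>" for s t
  proof -
    have "\<phi>1 s - \<phi>1 t = (mfun xs s - mfun xs t) / c" by (simp add: \<phi>1_def diff_divide_distrib)
    then show ?thesis using c0 by (simp add: abs_divide)
  qed
  have d2: "\<bar>\<phi>2 s - \<phi>2 t\<bar> * c = \<bar>mfun xs s - mfun xs t\<bar>" for s t
  proof -
    have "\<phi>2 s - \<phi>2 t = - ((mfun xs s - mfun xs t) / c)" by (simp add: \<phi>2_def diff_divide_distrib)
    then show ?thesis using c0 by (simp add: abs_divide)
  qed
  have H1: "f1 \<in> Hclass T \<omega>" unfolding f1_def
    by (rule scal_H[OF e(2) n1]) (use mL d1 in \<open>simp add: c_def[symmetric]\<close>)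
  have H2: "f2 \<in> Hclass T \<omega>" unfolding f2_def
    by (rule scal_H[OF e(2) n2]) (use mL d2 in \<open>simp add: c_def[symmetric]\<close>)
  let ?X1 = "X_integral sm P M (resf Q f1)" and ?X2 = "X_integral sm P M (resf Q f2)"
  let ?I = "integral\<^sup>L M (resf Q (mfun xs))"
  let ?K = "\<lambda>k. kap Q (Znet k) ` space M"
  let ?mu = "\<lambda>k j. measure M {t\<in>space M. kap Q (Znet k) t = j}"
  have step: "2 * integral\<^sup>L M (apx (mfun xs) k) \<le>
      dist (simple_int sm P M (apx f1 k)) (simple_int sm P M (apx f2 k))" for k
  proof -
    let ?a1 = "integral\<^sup>L M (apx \<phi>1 k)" and ?a2 = "integral\<^sup>L M (apx \<phi>2 k)"
    have s1: "simple_int sm P M (apx f1 k) = sm ?a1 e"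
      unfolding f1_def[abs_def] by (rule apx_scal[OF e(2) n1])
    have s2: "simple_int sm P M (apx f2 k) = sm ?a2 e"
      unfolding f2_def[abs_def] by (rule apx_scal[OF e(2) n2])
    have "?a1 - ?a2 = (\<Sum>j\<in>?K k. ?mu k j * (case_option 0 (\<lambda>i. \<phi>1 (Znet k ! i)) j
           - case_option 0 (\<lambda>i. \<phi>2 (Znet k ! i)) j))"
      unfolding apx_int_real by (simp add: sum_subtractf right_diff_distrib)
    also have "\<dots> = (\<Sum>j\<in>?K k. (2 / c) * (?mu k j * case_option 0 (\<lambda>i. mfun xs (Znet k ! i)) j))"
    proof (rule sum.cong[OF refl])
      fix j show "?mu k j * (case_option 0 (\<lambda>i. \<phi>1 (Znet k ! i)) j - case_option 0 (\<lambda>i. \<phi>2 (Znet k ! i)) j)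
          = (2 / c) * (?mu k j * case_option 0 (\<lambda>i. mfun xs (Znet k ! i)) j)"
        by (cases j) (auto simp: \<phi>1_def \<phi>2_def field_simps)
    qed
    also have "\<dots> = (2 / c) * integral\<^sup>L M (apx (mfun xs) k)"
      by (simp add: apx_int_real sum_distrib_left)
    finally have diff: "?a1 - ?a2 = (2 / c) * integral\<^sup>L M (apx (mfun xs) k)" .
    have a2: "0 \<le> ?a2"
      by (rule Bochner_Integration.integral_nonneg) (use n2 Znet_in in \<open>auto simp: apx_eq\<close>)
    have im: "0 \<le> integral\<^sup>L M (apx (mfun xs) k)"
      by (rule Bochner_Integration.integral_nonneg) (use m_nonneg[OF xs(1)] in \<open>auto simp: apx_eq\<close>)
    have "0 \<le> (2 / c) * integral\<^sup>L M (apx (mfun xs) k)" using im c0 by simp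
    then have le: "?a2 \<le> ?a1" using diff by linarith
    have "(?a1 - ?a2) * c \<le> dist (sm ?a1 e) (sm ?a2 e)"
      using dist_scal_ge[OF e(2) e(1) a2 le] by (simp add: c_def)
    moreover have "(?a1 - ?a2) * c = 2 * integral\<^sup>L M (apx (mfun xs) k)" using diff c0 by simp
    ultimately show ?thesis unfolding s1 s2 c_def by simp
  qed
  have lim_d: "(\<lambda>k. dist (simple_int sm P M (apx f1 k)) (simple_int sm P M (apx f2 k))) \<longlonglongrightarrow> dist ?X1 ?X2"
    by (intro tendsto_dist X_int_res H1 H2)
  have lim_i: "(\<lambda>k. 2 * integral\<^sup>L M (apx (mfun xs) k)) \<longlonglongrightarrow> 2 * ?I"
    by (intro tendsto_mult tendsto_const real_int_res(1)[OF m_H[OF xs(1)]])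
  have I2: "2 * ?I \<le> dist ?X1 ?X2"
    by (rule LIMSEQ_le[OF lim_i lim_d]) (use step in blast)
  have info: "map (\<lambda>x. P (f1 x)) xs = map (\<lambda>x. P (f2 x)) xs"
    by (rule map_cong[OF refl]) (simp add: f1_def f2_def \<phi>1_def \<phi>2_def m_zero)
  define y where "y = \<Phi> (map (\<lambda>x. P (f1 x)) xs)"
  have Lam: "set_X_integral sm P M Q f = X_integral sm P M (resf Q f)" for f :: "'a \<Rightarrow> 'x"
    unfolding set_X_integral_def resf_fun ..
  have r1: "ereal (dist ?X1 y) \<le> rec_error (set_X_integral sm P M Q) (Hclass T \<omega>) (\<lambda>f. map (\<lambda>x. P (f x)) xs) \<Phi>"
    unfolding rec_error_def using H1 by (intro SUP_upper2[OF H1]) (simp add: Lam y_def)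
  have r2: "ereal (dist ?X2 y) \<le> rec_error (set_X_integral sm P M Q) (Hclass T \<omega>) (\<lambda>f. map (\<lambda>x. P (f x)) xs) \<Phi>"
    unfolding rec_error_def using H2 by (intro SUP_upper2[OF H2]) (simp add: Lam y_def info)
  have "dist ?X1 ?X2 \<le> dist ?X1 y + dist ?X2 y" by (rule dist_triangle2)
  then have "?I \<le> dist ?X1 y \<or> ?I \<le> dist ?X2 y" using I2 by linarith
  then have "ereal ?I \<le> rec_error (set_X_integral sm P M Q) (Hclass T \<omega>) (\<lambda>f. map (\<lambda>x. P (f x)) xs) \<Phi>"
    using r1 r2 by (meson ereal_less_eq(3) order_trans)
  then show ?thesis by (simp add: set_int_m)
qed

end



theorem theorem4:
  fixes sm :: "real \<Rightarrow> 'x::{comm_monoid_add,complete_space} \<Rightarrow> 'x"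
    and P :: "'x \<Rightarrow> 'x"
    and T Q :: "'a::metric_space set"
    and \<mu> :: "'a measure"
    and \<omega> :: "real \<Rightarrow> real"
    and xs :: "'a list"
  assumes "L_space sm"
    and "convexifying sm P"
    and "inv_elems \<inter> convex_elems sm \<noteq> {0}"
    and "compact T"
    and "Q \<subseteq> T" and "compact Q"
    and "space \<mu> = T" and "sets \<mu> = sets (restrict_space borel T)"
    and "finite_measure \<mu>"
    and "modulus_of_continuity \<omega>"
    and "xs \<noteq> []" and "set xs \<subseteq> T"
  shows "(opt_rec_error (set_X_integral sm P \<mu> Q) (Hclass T \<omega>) (\<lambda>f. map (\<lambda>x. P (f x)) xs)
           = ereal (LINT t:Q|\<mu>. Min ((\<lambda>x. \<omega> (dist x t)) ` set xs))) \<and>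
         (rec_error (set_X_integral sm P \<mu> Q) (Hclass T \<omega>) (\<lambda>f. map (\<lambda>x. P (f x)) xs)
           (\<lambda>ys. \<Sum>i<length xs. sm (measure \<mu> (vor_part T xs i \<inter> Q)) (ys ! i))
         = opt_rec_error (set_X_integral sm P \<mu> Q) (Hclass T \<omega>) (\<lambda>f. map (\<lambda>x. P (f x)) xs))"
proof -
  have Tne: "T \<noteq> {}" using assms(11,12) by (cases xs) auto
  interpret MT sm P \<mu> T Q \<omega>
    using assms Tne by (intro MT.intro MS.intro LS.intro MS_axioms.intro MT_axioms.intro) assumption+
  have z: "0 \<in> inv_elems \<inter> convex_elems sm"
    unfolding inv_elems_def convex_elems_def by (auto simp: sm_zero)
  obtain e where e: "e \<in> inv_elems" "e \<in> convex_elems sm" "e \<noteq> 0"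
    using assms(3) z by blast
  let ?L = "set_X_integral sm P \<mu> Q" and ?W = "Hclass T \<omega>" and ?I = "\<lambda>f. map (\<lambda>x. P (f x)) xs"
  let ?Phi = "\<lambda>ys. \<Sum>i<length xs. sm (measure \<mu> (vor_part T xs i \<inter> Q)) (ys ! i)"
  let ?R = "ereal (LINT t:Q|\<mu>. Min ((\<lambda>x. \<omega> (dist x t)) ` set xs))"
  have R: "(LINT t:Q|\<mu>. mfun xs t) = (LINT t:Q|\<mu>. Min ((\<lambda>x. \<omega> (dist x t)) ` set xs))"
    by (simp add: mfun_def)
  have up: "rec_error ?L ?W ?I ?Phi \<le> ?R"
    unfolding rec_error_def
  proof (rule SUP_least)
    fix f :: "'a \<Rightarrow> 'x" assume "f \<in> ?W"
    then show "ereal (dist (?L f) (?Phi (?I f))) \<le> ?R"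
      using upper[OF _ assms(11,12), of f] R by simp
  qed
  have lo: "?R \<le> opt_rec_error ?L ?W ?I"
    unfolding opt_rec_error_def
    by (rule INF_greatest) (use lower[OF e assms(11,12)] R in simp)
  have o2: "opt_rec_error ?L ?W ?I \<le> rec_error ?L ?W ?I ?Phi"
    unfolding opt_rec_error_def by (rule INF_lower) simp
  have o1: "opt_rec_error ?L ?W ?I \<le> ?R" using o2 up by (rule order_trans)
  have eq1: "opt_rec_error ?L ?W ?I = ?R" using o1 lo by (rule antisym)
  have "rec_error ?L ?W ?I ?Phi \<le> opt_rec_error ?L ?W ?I" using up eq1 by simp
  then have eq2: "rec_error ?L ?W ?I ?Phi = opt_rec_error ?L ?W ?I" using o2 by (rule antisym)
  show ?thesis using eq1 eq2 by blast
qed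


end
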